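(* Let $q,q',n$ be integers with $q'\ge 2q>3$ and $n>1$. Let $S$ be an $\mathcal{OS}_q(n)$ of period $m$ with ring sequence $[s_0,\ldots,s_{m-1}]$, and for $x\in\mathbb{Z}_q$ let $x'$ denote the class in $\mathbb{Z}_{q'}$ of the integer in $\{0,\ldots,q-1\}$ representing $x$. Define $t_i\in\mathbb{Z}_{q'}$ for $0\le i\le m-1$ by $t_i=(-1)^{i+m-1}s_i'$ if $s_i'\neq 0$ and $t_i=(-1)^{i+m-1}q$ if $s_i'=0$. Let $T'$ be the periodic sequence over $\mathbb{Z}_{q'}$ with ring sequence $[t_0,\ldots,t_{m-1},-t_0,\ldots,-t_{m-1}]$. Then $T'$ is an $\mathcal{SOS}_{q'}(n)$ and $w_{q'}(T')=0$.
   Context: For a periodic sequence $S=(s_i)$ over $\mathbb{Z}_q$ write $\mathbf{s}_n(i)=(s_i,\ldots,s_{i+n-1})$; $\mathbf{u}^R$ denotes the reverse of a tuple and $-\mathbf{u}$ its termwise negative. An $n$-window sequence of period $m$ satisfies $\mathbf{s}_n(i)=\mathbf{s}_n(j)\Rightarrow i\equiv j\pmod m$. An $\mathcal{OS}_q(n)$ is an $n$-window sequence with $\mathbf{s}_n(i)\neq\mathbf{s}_n(j)^R$ for all $i,j$; an $\mathcal{SOS}_q(n)$ is an $\mathcal{OS}_q(n)$ with also $\mathbf{s}_n(i)\neq-\mathbf{s}_n(j)^R$ for all $i,j$. The ring sequence of a sequence of period $m$ is one period. The weight $w(S)$ is the integer sum of one period with terms taken in $\{0,\ldots,q-1\}$;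 $w_q(S)=w(S)\bmod q$. *)

theory Defs
  imports Main
begin

text \<open>Elements of Z_q are represented by their canonical integer representatives
in {0..<q}. A periodic sequence over Z_q is a function nat => int with values
in {0..<q}.\<close>

definition window :: "(nat \<Rightarrow> int) \<Rightarrow> nat \<Rightarrow> nat \<Rightarrow> int list" where
  "window s n i = map (\<lambda>k. s (i + k)) [0..<n]"

definition neg_tuple :: "int \<Rightarrow> int list \<Rightarrow> int list" where
  "neg_tuple q u = map (\<lambda>x. (- x) mod q) u"

definition seq_over :: "int \<Rightarrow> nat \<Rightarrow> (nat \<Rightarrow> int) \<Rightarrow> bool" where
  "seq_over q m s \<longleftrightarrow> (\<forall>i. 0 \<le> s i \<and> s i < q) \<and> 0 < m \<and> (\<forall>i. s (i + m) = s i)"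

definition n_window_seq :: "int \<Rightarrow> nat \<Rightarrow> nat \<Rightarrow> (nat \<Rightarrow> int) \<Rightarrow> bool" where
  "n_window_seq q n m s \<longleftrightarrow> seq_over q m s \<and>
     (\<forall>i j. window s n i = window s n j \<longrightarrow> i mod m = j mod m)"

definition OS :: "int \<Rightarrow> nat \<Rightarrow> nat \<Rightarrow> (nat \<Rightarrow> int) \<Rightarrow> bool" where
  "OS q n m s \<longleftrightarrow> n_window_seq q n m s \<and>
     (\<forall>i j. window s n i \<noteq> rev (window s n j))"

definition SOS :: "int \<Rightarrow> nat \<Rightarrow> nat \<Rightarrow> (nat \<Rightarrow> int) \<Rightarrow> bool" where
  "SOS q n m s \<longleftrightarrow> OS q n m s \<and>
     (\<forall>i j. window s n i \<noteq> neg_tuple q (rev (window s n j)))"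

definition weight :: "nat \<Rightarrow> (nat \<Rightarrow> int) \<Rightarrow> int" where
  "weight m s = (\<Sum>i<m. s i)"

definition wq :: "int \<Rightarrow> nat \<Rightarrow> (nat \<Rightarrow> int) \<Rightarrow> int" where
  "wq q m s = weight m s mod q"

definition t_seq :: "int \<Rightarrow> int \<Rightarrow> nat \<Rightarrow> (nat \<Rightarrow> int) \<Rightarrow> nat \<Rightarrow> int" where
  "t_seq q q' m s i = ((-1) ^ (i + m - 1) * (if s i mod q' \<noteq> 0 then s i else q)) mod q'"

definition T_seq :: "int \<Rightarrow> int \<Rightarrow> nat \<Rightarrow> (nat \<Rightarrow> int) \<Rightarrow> nat \<Rightarrow> int" where
  "T_seq q q' m s i = (let k = i mod (2 * m) in
      if k < m then t_seq q q' m s k else (- t_seq q q' m s (k - m)) mod q')"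

end

theory Submission
  imports Defs
begin

definition fz :: "int \<Rightarrow> int \<Rightarrow> int" where
  "fz q x = (if x \<noteq> 0 then x else q)"

definition hm :: "int \<Rightarrow> int \<Rightarrow> int \<Rightarrow> int" where
  "hm q q' v = (if v \<le> q then v else q' - v)"

lemma sum_split_aux: "(\<Sum>k<a+p. f k) = (\<Sum>k<a. f k) + (\<Sum>k<p. f (a+k))"
  for f :: "nat \<Rightarrow> int"
  by (induct p) (simp_all add: add.assoc)

lemma per_aux:
  assumes "seq_over q m s" shows "s (j + m*d) = s j"
proof (induct d)
  case (Suc d)
  have "s (j + m * Suc d) = s ((j + m*d) + m)" by (simp add: algebra_simps)
  also have "\<dots> = s (j + m*d)" using assms unfolding seq_over_def by blast
  finally show ?case using Suc by simp
qed simp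

lemma per_mod:
  assumes "seq_over q m s" shows "s (i mod m) = s i"
  using per_aux[OF assms, of "i mod m" "i div m"] by simp

lemma neg_mod: "0 < (x::int) \<Longrightarrow> x < b \<Longrightarrow> (-x) mod b = b - x"
proof -
  assume a: "0 < x" "x < b"
  then have "x mod b = x" by (simp add: mod_pos_pos_trivial)
  then show ?thesis using a by (simp add: zmod_zminus1_eq_if)
qed

lemma sign_cases: "((-1::int)^e = 1 \<or> (-1::int)^e = -1)"
  by (cases "even e") auto

lemma T_form:
  assumes so: "seq_over q m s" and qq: "q' \<ge> 2*q" and q0: "q > 0"
  shows "\<exists>c. (c = 1 \<or> c = -1) \<and> T_seq q q' m s k = (c * fz q (s k)) mod q'"
proof -
  have m0: "m > 0" using so unfolding seq_over_def by auto
  have sr: "\<And>r. s r mod q' = s r"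
  proof -
    fix r have "0 \<le> s r" "s r < q" using so unfolding seq_over_def by auto
    then have "0 \<le> s r" "s r < q'" using qq q0 by linarith+
    then show "s r mod q' = s r" by (simp add: mod_pos_pos_trivial)
  qed
  have sr2: "\<And>r. (s r mod q' \<noteq> 0) = (s r \<noteq> 0)" using sr by simp
  have tf: "\<And>r. t_seq q q' m s r = ((-1)^(r+m-1) * fz q (s r)) mod q'"
    unfolding t_seq_def fz_def using sr2 by simp
  define r where "r = k mod (2*m)"
  show ?thesis
  proof (cases "r < m")
    case True
    have "r mod m = k mod m" unfolding r_def
      by (metis mod_mod_cancel dvd_triv_right mult.commute)
    then have "s r = s k" using per_mod[OF so, of r] per_mod[OF so, of k] True by simp
    then have "T_seq q q' m s k = ((-1)^(r+m-1) * fz q (s k)) mod q'"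
      unfolding T_seq_def Let_def r_def[symmetric] using True tf by simp
    then show ?thesis using sign_cases by blast
  next
    case False
    have r2: "r < 2*m" unfolding r_def using m0 by simp
    have "(r - m) mod m = k mod m"
    proof -
      have "(r - m) mod m = r mod m" using False
        by (metis le_add_diff_inverse2 mod_add_self2 not_less)
      also have "\<dots> = k mod m" unfolding r_def
        by (metis mod_mod_cancel dvd_triv_right mult.commute)
      finally show ?thesis .
    qed
    then have "s (r - m) = s k" using per_mod[OF so, of "r-m"] per_mod[OF so, of k] False r2 by simp
    then have "T_seq q q' m s k = (- (((-1)^(r-m+m-1) * fz q (s k)) mod q')) mod q'"
      unfolding T_seq_def Let_def r_def[symmetric] using False tf by simp
    also have "\<dots> = ((- ((-1)^(r-m+m-1))) * fz q (s k)) mod q'"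
      by (simp add: mod_minus_eq)
    finally show ?thesis using sign_cases[of "r-m+m-1"] by auto
  qed
qed

lemma fz_range:
  assumes "0 \<le> x" "x < q" shows "1 \<le> fz q x \<and> fz q x \<le> q"
  using assms unfolding fz_def by auto

lemma hm_pos:
  assumes "1 \<le> x" "x \<le> q" "2*q \<le> q'" "c = 1 \<or> c = -1"
  shows "hm q q' ((c*x) mod q') = x"
  using assms(4)
proof
  assume "c = 1" then show ?thesis using assms unfolding hm_def
    by (simp add: mod_pos_pos_trivial)
next
  assume c: "c = -1"
  have "(-x) mod q' = q' - x"
  proof -
    show ?thesis using assms neg_mod[of x q'] by simp
  qed
  then show ?thesis using c assms unfolding hm_def by auto
qed

lemma T_range:
  fixes x c q q' :: int
  assumes "1 \<le> x" "x \<le> q" "2*q \<le> q'" "c = 1 \<or> c = -1"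
  shows "0 < (c*x) mod q' \<and> (c*x) mod q' < q'"
  using assms(4)
proof
  assume "c = 1" then show ?thesis using assms by (simp add: mod_pos_pos_trivial)
next
  assume c: "c = -1"
  have "(-x) mod q' = q' - x" using assms neg_mod[of x q'] by simp
  then show ?thesis using c assms by simp
qed

context
  fixes q q' :: int and n m :: nat and s :: "nat \<Rightarrow> int"
  assumes qq: "q' \<ge> 2 * q" and q2: "2 * q > 3" and os: "OS q n m s"
begin

lemma so: "seq_over q m s" using os unfolding OS_def n_window_seq_def by auto
lemma q0: "q > 0" using q2 by simp
lemma m0: "m > 0" using so unfolding seq_over_def by auto
lemma srange: "0 \<le> s k \<and> s k < q" using so unfolding seq_over_def by auto

abbreviation "T \<equiv> T_seq q q' m s"

lemma hmT: "hm q q' (T k) = fz q (s k)"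
proof -
  obtain c where c: "c = 1 \<or> c = -1" "T k = (c * fz q (s k)) mod q'"
    using T_form[OF so qq q0, of k] by auto
  have "1 \<le> fz q (s k)" "fz q (s k) \<le> q" using fz_range[of "s k" q] srange[of k] by auto
  from hm_pos[OF this qq c(1)] c(2) show ?thesis by simp
qed

lemma hmTneg: "hm q q' ((- T k) mod q') = fz q (s k)"
proof -
  obtain c where c: "c = 1 \<or> c = -1" "T k = (c * fz q (s k)) mod q'"
    using T_form[OF so qq q0, of k] by auto
  have "(- T k) mod q' = ((-c) * fz q (s k)) mod q'" using c(2) by (simp add: mod_minus_eq)
  moreover have "1 \<le> fz q (s k)" "fz q (s k) \<le> q" using fz_range[of "s k" q] srange[of k] by auto
  moreover have "-c = 1 \<or> -c = -1" using c(1) by auto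
  ultimately show ?thesis using hm_pos[OF _ _ qq, of "fz q (s k)" "-c"] by simp
qed

lemma Trange: "0 < T k \<and> T k < q'"
proof -
  obtain c where c: "c = 1 \<or> c = -1" "T k = (c * fz q (s k)) mod q'"
    using T_form[OF so qq q0, of k] by auto
  have "1 \<le> fz q (s k)" "fz q (s k) \<le> q" using fz_range[of "s k" q] srange[of k] by auto
  from T_range[OF this qq c(1)] c(2) show ?thesis by simp
qed

lemma T_shift: "T (k + m) = (- T k) mod q'"
proof -
  define r where "r = k mod (2*m)"
  have r2: "r < 2*m" unfolding r_def using m0 by simp
  have tr: "\<And>r. 0 \<le> t_seq q q' m s r \<and> t_seq q q' m s r < q'"
    unfolding t_seq_def using qq q0 by simp
  show ?thesis
  proof (cases "r < m")
    case True
    have "(k+m) mod (2*m) = r + m" unfolding r_def using True r_def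
      by (metis add_less_cancel_right mod_add_left_eq mod_less mult_2)
    then show ?thesis using True unfolding T_seq_def Let_def r_def[symmetric] by simp
  next
    case False
    have "(k+m) mod (2*m) = r - m"
    proof -
      have "(k+m) mod (2*m) = (r + m) mod (2*m)" unfolding r_def by (simp add: mod_add_left_eq)
      also have "r + m = (r - m) + 2*m" using False by simp
      also have "((r - m) + 2*m) mod (2*m) = r - m" using r2 False
        by (simp only: mod_add_self2) simp
      finally show ?thesis .
    qed
    moreover have "r - m < m" using r2 False by simp
    ultimately have "T (k+m) = t_seq q q' m s (r - m)" using False r2 unfolding T_seq_def Let_def by simp
    moreover have "T k = (- t_seq q q' m s (r - m)) mod q'"
      using False unfolding T_seq_def Let_def r_def[symmetric] by simp
    ultimately show ?thesis using tr[of "r-m"] by (simp add: mod_minus_eq mod_pos_pos_trivial)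
  qed
qed

lemma T_per: "x mod (2*m) = y mod (2*m) \<Longrightarrow> T x = T y"
  unfolding T_seq_def Let_def by simp

lemma map_hm_win: "map (hm q q') (window T n i) = map (fz q) (window s n i)"
  unfolding window_def using hmT by simp

lemma map_hm_neg: "map (hm q q') (neg_tuple q' (rev (window T n j))) = rev (map (fz q) (window s n j))"
  unfolding window_def neg_tuple_def using hmTneg by (simp add: rev_map)

lemma fz_inj: "inj_on (fz q) {0..<q}"
  unfolding inj_on_def fz_def by auto

lemma map_fz_eq: "map (fz q) xs = map (fz q) ys \<Longrightarrow> set xs \<subseteq> {0..<q} \<Longrightarrow> set ys \<subseteq> {0..<q} \<Longrightarrow> xs = ys"
  using inj_on_map_eq_map[of "fz q" xs ys] fz_inj by (meson inj_on_subset le_sup_iff)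

lemma win_set: "set (window s n i) \<subseteq> {0..<q}"
  unfolding window_def using srange by auto

lemma OS_T: "window T n i \<noteq> rev (window T n j)"
proof
  assume a: "window T n i = rev (window T n j)"
  have "map (fz q) (window s n i) = map (hm q q') (window T n i)" using map_hm_win[of i] by simp
  also have "\<dots> = rev (map (hm q q') (window T n j))" using a by (simp add: rev_map)
  also have "\<dots> = map (fz q) (rev (window s n j))" using map_hm_win[of j] by (simp add: rev_map)
  finally have "map (fz q) (window s n i) = map (fz q) (rev (window s n j))" .
  then have "window s n i = rev (window s n j)" using map_fz_eq win_set by simp
  then show False using os unfolding OS_def by blast
qed

lemma SOS_T: "window T n i \<noteq> neg_tuple q' (rev (window T n j))"
proof
  assume a: "window T n i = neg_tuple q' (rev (window T n j))"
  have "map (fz q) (window s n i) = map (hm q q') (window T n i)" using map_hm_win[of i] by simp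
  also have "\<dots> = rev (map (fz q) (window s n j))" using a map_hm_neg[of j] by simp
  also have "\<dots> = map (fz q) (rev (window s n j))" by (simp add: rev_map)
  finally have "map (fz q) (window s n i) = map (fz q) (rev (window s n j))" .
  then have "window s n i = rev (window s n j)" using map_fz_eq win_set by simp
  then show False using os unfolding OS_def by blast
qed

lemma mod2m: "(i::nat) mod (2*m) = m * (i div m mod 2) + i mod m"
  using mod_mult2_eq[of i m 2] by (simp add: mult.commute)

lemma win_T: "window T n i = window T n j \<Longrightarrow> i mod (2*m) = j mod (2*m)"
proof (rule ccontr)
  assume w: "window T n i = window T n j" and ne: "i mod (2*m) \<noteq> j mod (2*m)"
  have "map (fz q) (window s n i) = map (fz q) (window s n j)"
    using w map_hm_win[of i] map_hm_win[of j] by simp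
  then have "window s n i = window s n j" using map_fz_eq win_set by simp
  then have ij: "i mod m = j mod m" using os unfolding OS_def n_window_seq_def by blast
  have jm: "j mod (2*m) = (i + m) mod (2*m)"
  proof -
    have "(i+m) div m = i div m + 1" using m0 by (metis div_add_self2 less_not_refl2)
    moreover have "(i+m) mod m = i mod m" by simp
    ultimately have "(i+m) mod (2*m) = m * ((i div m + 1) mod 2) + i mod m"
      using mod2m[of "i+m"] by simp
    define a where "a = i div m mod 2"
    define b where "b = j div m mod 2"
    have ab: "a \<noteq> b" using mod2m[of i] mod2m[of j] ij ne unfolding a_def b_def by auto
    have g: "\<And>x y::nat. x mod 2 \<noteq> y mod 2 \<Longrightarrow> (x+1) mod 2 = y mod 2" by presburger
    have "(i div m + 1) mod 2 = b" using g ab unfolding a_def b_def by blast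
    then show ?thesis using mod2m[of j] ij \<open>(i+m) mod (2*m) = m * ((i div m + 1) mod 2) + i mod m\<close>
      unfolding b_def by simp
  qed
  have all0: "\<forall>k<n. s (i+k) = 0"
  proof (intro allI impI)
    fix k assume k: "k < n"
    have nth: "\<And>x. window T n x ! k = T (x+k)" unfolding window_def using k by simp
    have "T (j+k) = T (i+k)" using w nth[of i] nth[of j] by simp
    moreover have "T (j+k) = T (i+k+m)"
    proof (rule T_per)
      have "(j + k) mod (2*m) = (j mod (2*m) + k) mod (2*m)" by (simp add: mod_add_left_eq)
      also have "\<dots> = ((i+m) mod (2*m) + k) mod (2*m)" using jm by simp
      also have "\<dots> = ((i+m) + k) mod (2*m)" by (rule mod_add_left_eq)
      also have "\<dots> = (i+k+m) mod (2*m)" by (simp add: ac_simps)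
      finally show "(j + k) mod (2*m) = (i+k+m) mod (2*m)" .
    qed
    ultimately have e: "T (i+k) = (- T (i+k)) mod q'" using T_shift by simp
    define v where "v = T (i+k)"
    have vr: "0 < v \<and> v < q'" using Trange unfolding v_def by simp
    have "(- v) mod q' = q' - v"
    proof -
      show ?thesis using vr neg_mod[of v q'] by simp
    qed
    then have v2: "2*v = q'" using e unfolding v_def[symmetric] by simp
    obtain c where c: "c = 1 \<or> c = -1" "v = (c * fz q (s (i+k))) mod q'"
      using T_form[OF so qq q0, of "i+k"] unfolding v_def by auto
    have fr: "1 \<le> fz q (s (i+k)) \<and> fz q (s (i+k)) \<le> q" using fz_range srange by blast
    have "hm q q' v = fz q (s (i+k))" unfolding v_def using hmT by simp
    then have "fz q (s (i+k)) = q" using v2 qq fr unfolding hm_def by (auto split: if_splits)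
    then show "s (i+k) = 0" using srange[of "i+k"] unfolding fz_def by (auto split: if_splits)
  qed
  have "window s n i = replicate n 0" unfolding window_def using all0
    by (simp add: list_eq_iff_nth_eq)
  then have "window s n i = rev (window s n i)" by simp
  then show False using os unfolding OS_def by blast
qed

lemma seq_T: "seq_over q' (2*m) T"
proof -
  have "\<forall>i. 0 \<le> T i \<and> T i < q'" using Trange by (simp add: less_imp_le)
  moreover have "0 < 2*m" using m0 by simp
  moreover have "\<forall>i. T (i + 2*m) = T i"
  proof
    fix i show "T (i + 2*m) = T i" by (rule T_per) simp
  qed
  ultimately show ?thesis unfolding seq_over_def by blast
qed

lemma weight_T: "wq q' (2*m) T = 0"
proof -
  have "weight (2*m) T = (\<Sum>k<m. T k) + (\<Sum>k<m. T (m+k))"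
    unfolding weight_def using sum_split_aux[of T m m] by (simp add: mult_2)
  also have "\<dots> = (\<Sum>k<m. T k + (- T k) mod q')"
    using T_shift by (simp add: sum.distrib add.commute)
  finally have e: "weight (2*m) T = (\<Sum>k<m. T k + (- T k) mod q')" .
  have "\<And>k. q' dvd (T k + (- T k) mod q')"
    by (simp add: mod_0_imp_dvd mod_add_right_eq)
  then have "q' dvd weight (2*m) T" unfolding e by (simp add: dvd_sum)
  then show ?thesis unfolding wq_def by simp
qed

end

theorem theorem3p15:
  fixes q q' :: int and n m :: nat and s :: "nat \<Rightarrow> int"
  assumes "q' \<ge> 2 * q" and "2 * q > 3" and "n > 1"
    and "OS q n m s"
  shows "SOS q' n (2 * m) (T_seq q q' m s) \<and> wq q' (2 * m) (T_seq q q' m s) = 0"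
proof -
  let ?T = "T_seq q q' m s"
  have a: "seq_over q' (2*m) ?T" by (rule seq_T[OF assms(1,2,4)])
  have b: "\<forall>i j. window ?T n i = window ?T n j \<longrightarrow> i mod (2*m) = j mod (2*m)"
    using win_T[OF assms(1,2,4)] by blast
  have c: "\<forall>i j. window ?T n i \<noteq> rev (window ?T n j)"
    using OS_T[OF assms(1,2,4)] by blast
  have d: "\<forall>i j. window ?T n i \<noteq> neg_tuple q' (rev (window ?T n j))"
    using SOS_T[OF assms(1,2,4)] by blast
  have "SOS q' n (2 * m) ?T"
    unfolding SOS_def OS_def n_window_seq_def using a b c d by (intro conjI)
  then show ?thesis using weight_T[OF assms(1,2,4)] by simp
qed

end
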